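(* Let $u\in\mathbb{N}^m$ and put $M:=\{x\in\mathbb{R}^m:0\leq x\leq u\}$ (entrywise order). Any finite $C\subseteq M$ with $\min\{\|x-y\|_\infty:x,y\in C,x\neq y\}>1$ satisfies $|C|\leq\prod_{i=1}^m u_i$. *)

theory Defs
  imports "HOL-Analysis.Analysis"
begin

definition linf_dist :: "real ^ 'm \<Rightarrow> real ^ 'm \<Rightarrow> real" where
  "linf_dist x y = Max (range (\<lambda>i. \<bar>x $ i - y $ i\<bar>))"

definition box_M :: "('m \<Rightarrow> nat) \<Rightarrow> (real ^ 'm) set" where
  "box_M u = {x. \<forall>i. 0 \<le> x $ i \<and> x $ i \<le> real (u i)}"

end

theory Submission
  imports Defs
begin

lemma cell_bounds:
  fixes a :: real and n :: nat
  assumes "0 \<le> a" "a \<le> real n" "n \<ge> 1"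
  shows "real (min (nat \<lfloor>a\<rfloor>) (n - 1)) \<le> a \<and> a \<le> real (min (nat \<lfloor>a\<rfloor>) (n - 1)) + 1"
proof (cases "nat \<lfloor>a\<rfloor> \<le> n - 1")
  case True
  then show ?thesis using assms by (simp add: min_def)
next
  case False
  then have "real (n - 1) \<le> a" using assms
  proof -
    have "real (n - 1) \<le> real (nat \<lfloor>a\<rfloor>)" using False by simp
    also have "\<dots> = of_int \<lfloor>a\<rfloor>" using assms(1) by simp
    also have "\<dots> \<le> a" by simp
    finally show ?thesis .
  qed
  then show ?thesis using False assms by (simp add: min_def of_nat_diff)
qed

theorem lemma4p4:
  fixes u :: "'m::finite \<Rightarrow> nat" and C :: "(real ^ 'm) set"
  assumes upos: "\<forall>i. u i \<ge> 1"
    and "finite C" and "C \<subseteq> box_M u"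
    and sep: "\<forall>x\<in>C. \<forall>y\<in>C. x \<noteq> y \<longrightarrow> linf_dist x y > 1"
  shows "card C \<le> (\<Prod>i\<in>UNIV. u i)"
proof -
  define f where "f x = (\<lambda>i. min (nat \<lfloor>x $ i\<rfloor>) (u i - 1))" for x :: "real ^ 'm"
  have inj: "inj_on f C"
  proof (rule inj_onI, rule ccontr)
    fix x y assume x: "x \<in> C" and y: "y \<in> C" and e: "f x = f y" and ne: "x \<noteq> y"
    have "\<bar>x $ i - y $ i\<bar> \<le> 1" for i
    proof -
      have bx: "0 \<le> x $ i" "x $ i \<le> real (u i)" using x assms(3) by (auto simp: box_M_def)
      have by': "0 \<le> y $ i" "y $ i \<le> real (u i)" using y assms(3) by (auto simp: box_M_def)
      have fe: "min (nat \<lfloor>x $ i\<rfloor>) (u i - 1) = min (nat \<lfloor>y $ i\<rfloor>) (u i - 1)"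
        using fun_cong[OF e, of i] by (simp add: f_def)
      define k where "k = real (min (nat \<lfloor>x $ i\<rfloor>) (u i - 1))"
      have "k \<le> x $ i \<and> x $ i \<le> k + 1" using cell_bounds[OF bx upos[rule_format]] by (simp add: k_def)
      moreover have "k \<le> y $ i \<and> y $ i \<le> k + 1" using cell_bounds[OF by' upos[rule_format]] fe by (simp add: k_def)
      ultimately show ?thesis by (simp add: abs_le_iff)
    qed
    then have "linf_dist x y \<le> 1" unfolding linf_dist_def
      by (subst Max_le_iff) auto
    with sep x y ne show False by force
  qed
  have sub: "f ` C \<subseteq> Pi\<^sub>E UNIV (\<lambda>i. {..<u i})"
    using upos by (auto simp: f_def) (metis Suc_le_eq Suc_pred min.cobounded2 le_trans not_le)
  have "card C = card (f ` C)" using inj by (simp add: card_image)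
  also have "\<dots> \<le> card (Pi\<^sub>E UNIV (\<lambda>i. {..<u i}))"
    by (rule card_mono[OF _ sub]) (simp add: finite_PiE)
  also have "\<dots> = (\<Prod>i\<in>UNIV. u i)" by (simp add: card_PiE)
  finally show ?thesis .
qed

end
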